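(* Let $\mathcal{A}$ and $\mathcal{U}$ be Banach algebras, $\theta$ a nonzero character on $\mathcal{A}$, and $T:\mathcal{A}\times_{\theta}\mathcal{U}\to\mathcal{A}\times_{\theta}\mathcal{U}$ a multiplier, written as $T((a,u))=(R_1(a)+S_1(u),\ R_2(a)+S_2(u))$ with linear maps $R_1:\mathcal{A}\to\mathcal{A}$, $R_2:\mathcal{A}\to\mathcal{U}$, $S_1:\mathcal{U}\to\mathcal{A}$, $S_2:\mathcal{U}\to\mathcal{U}$. Then: (i) $R_2$ and $S_2$ are continuous; (ii) $\mathfrak{S}(R_1)\subseteq\ker\theta$ and $\mathfrak{S}(S_1)\subseteq\ker\theta$.
   Context: The Lau product $\mathcal{A}\times_{\theta}\mathcal{U}$ is $\mathcal{A}\times\mathcal{U}$ with norm $\|(a,u)\|=\|a\|+\|u\|$ and product $(a,u)(a',u')=(aa',\theta(a)u'+\theta(a')u+uu')$. A multiplier on a Banach algebra $\mathcal{B}$ is a linear map $T$ with $xT(y)=T(x)y$ for all $x,y\in\mathcal{B}$. For a linear map $L:\mathcal{E}\to\mathcal{F}$ between Banach spaces, $\mathfrak{S}(L)=\{y\in\mathcal{F}:\exists (x_n)\subseteq\mathcal{E},\ x_n\to0,\ L(x_n)\to y\}$. *)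

theory Defs
  imports "HOL-Analysis.Analysis"
begin

text \<open>A complex Banach algebra: a (not necessarily unital) real Banach algebra
  together with a complex scalar multiplication extending the real one,
  which is compatible with the ring structure and absolutely homogeneous.\<close>
definition cplx_banach_alg :: "(complex \<Rightarrow> 'a::{real_normed_algebra,banach} \<Rightarrow> 'a) \<Rightarrow> bool" where
  "cplx_banach_alg sc \<longleftrightarrow>
     (\<forall>r x. sc (complex_of_real r) x = scaleR r x) \<and>
     (\<forall>c d x. sc (c + d) x = sc c x + sc d x) \<and>
     (\<forall>c x y. sc c (x + y) = sc c x + sc c y) \<and>
     (\<forall>c d x. sc (c * d) x = sc c (sc d x)) \<and>
     (\<forall>c x. norm (sc c x) = cmod c * norm x) \<and>
     (\<forall>c x y. sc c (x * y) = sc c x * y \<and> sc c (x * y) = x * sc c y)"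

definition clinear_map :: "(complex \<Rightarrow> 'a \<Rightarrow> 'a) \<Rightarrow> (complex \<Rightarrow> 'b \<Rightarrow> 'b) \<Rightarrow> ('a::ab_group_add \<Rightarrow> 'b::ab_group_add) \<Rightarrow> bool" where
  "clinear_map scA scB f \<longleftrightarrow>
     (\<forall>x y. f (x + y) = f x + f y) \<and> (\<forall>c x. f (scA c x) = scB c (f x))"

definition character :: "(complex \<Rightarrow> 'a \<Rightarrow> 'a) \<Rightarrow> ('a::ring \<Rightarrow> complex) \<Rightarrow> bool" where
  "character scA \<theta> \<longleftrightarrow> clinear_map scA (*) \<theta> \<and> (\<forall>a b. \<theta> (a * b) = \<theta> a * \<theta> b) \<and> (\<exists>a. \<theta> a \<noteq> 0)"

definition lau_mult :: "(complex \<Rightarrow> 'u \<Rightarrow> 'u) \<Rightarrow> ('a \<Rightarrow> complex) \<Rightarrow> ('a::ring \<times> 'u::ring) \<Rightarrow> 'a \<times> 'u \<Rightarrow> 'a \<times> 'u" where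
  "lau_mult scU \<theta> p q = (fst p * fst q, scU (\<theta> (fst p)) (snd q) + scU (\<theta> (fst q)) (snd p) + snd p * snd q)"

text \<open>Multiplier: \<open>x T(y) = T(x) y\<close> (linearity is separately assumed).\<close>
definition multiplier :: "('b \<Rightarrow> 'b \<Rightarrow> 'b) \<Rightarrow> ('b \<Rightarrow> 'b) \<Rightarrow> bool" where
  "multiplier mul T \<longleftrightarrow> (\<forall>x y. mul x (T y) = mul (T x) y)"

definition separating_space :: "('a::real_normed_vector \<Rightarrow> 'b::real_normed_vector) \<Rightarrow> 'b set" where
  "separating_space L = {y. \<exists>x. x \<longlonglongrightarrow> 0 \<and> (\<lambda>n. L (x n)) \<longlonglongrightarrow> y}"

end

theory Submission
  imports Defs
begin

lemma cl_scaleR: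
  assumes "clinear_map scA scB f" "cplx_banach_alg scA"
    and "\<forall>r y. scB (complex_of_real r) y = scaleR r y"
  shows "f (scaleR r x) = scaleR r (f x)"
proof -
  have "f (scaleR r x) = f (scA (complex_of_real r) x)"
    using assms(2) by (simp add: cplx_banach_alg_def)
  also have "\<dots> = scB (complex_of_real r) (f x)" using assms(1) by (simp add: clinear_map_def)
  finally show ?thesis using assms(3) by simp
qed

lemma cl_add: "clinear_map scA scB f \<Longrightarrow> f (x + y) = f x + f y"
  by (simp add: clinear_map_def)

lemma cl_zero: "clinear_map scA scB f \<Longrightarrow> f 0 = 0"
proof -
  assume "clinear_map scA scB f"
  hence "f (0 + 0) = f 0 + f 0" by (rule cl_add)
  thus ?thesis by simp
qed

lemma cba_scaleR: "cplx_banach_alg sc \<Longrightarrow> \<forall>r y. sc (complex_of_real r) y = scaleR r y"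
  by (simp add: cplx_banach_alg_def)

lemma char_bound:
  fixes scA :: "complex \<Rightarrow> 'a::{real_normed_algebra,banach} \<Rightarrow> 'a"
  assumes A: "cplx_banach_alg scA" and ch: "character scA \<theta>"
  shows "cmod (\<theta> a) \<le> norm a"
proof (rule ccontr)
  assume "\<not> cmod (\<theta> a) \<le> norm a"
  hence lt: "norm a < cmod (\<theta> a)" by simp
  hence nz: "\<theta> a \<noteq> 0" by auto
  have mul: "\<And>x y. \<theta> (x * y) = \<theta> x * \<theta> y" using ch by (simp add: character_def)
  have add: "\<And>x y. \<theta> (x + y) = \<theta> x + \<theta> y" using ch by (simp add: character_def clinear_map_def)
  have sc: "\<And>c x. \<theta> (scA c x) = c * \<theta> x" using ch by (simp add: character_def clinear_map_def)
  define b where "b = scA (inverse (\<theta> a)) a"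
  have tb: "\<theta> b = 1" using nz by (simp add: b_def sc)
  have nb: "norm b = norm a / cmod (\<theta> a)"
    using A by (simp add: b_def cplx_banach_alg_def norm_inverse divide_inverse mult.commute)
  have nb1: "norm b < 1" using lt nb nz by (simp add: divide_less_eq)
  define p where "p = rec_nat b (\<lambda>_ q. b * q)"
  have p0: "p 0 = b" and pS: "\<And>n. p (Suc n) = b * p n" by (simp_all add: p_def)
  have pn: "norm (p n) \<le> norm b ^ Suc n" for n
  proof (induction n)
    case 0 then show ?case by (simp add: p0)
  next
    case (Suc n)
    have "norm (p (Suc n)) \<le> norm b * norm (p n)" by (simp add: pS norm_mult_ineq)
    also have "\<dots> \<le> norm b * norm b ^ Suc n" using Suc by (simp add: mult_left_mono)
    finally show ?case by simp
  qed
  have sg: "summable (\<lambda>n. norm b ^ Suc n)"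
    using nb1 by (simp add: summable_geometric)
  have sp: "summable p" by (rule summable_comparison_test'[OF sg]) (use pn in auto)
  define c where "c = suminf p"
  have "suminf (\<lambda>n. p (Suc n)) = c - b" using suminf_split_head[OF sp] by (simp add: c_def p0)
  moreover have "suminf (\<lambda>n. p (Suc n)) = b * c"
    unfolding pS c_def by (rule suminf_mult[OF sp])
  ultimately have "c = b + b * c" by (simp add: algebra_simps)
  hence "\<theta> c = \<theta> b + \<theta> b * \<theta> c" by (metis add mul)
  thus False using tb by simp
qed

lemma char_bl:
  fixes scA :: "complex \<Rightarrow> 'a::{real_normed_algebra,banach} \<Rightarrow> 'a"
  assumes A: "cplx_banach_alg scA" and ch: "character scA \<theta>"
  shows "bounded_linear \<theta>"
proof (rule bounded_linear_intro[where K=1])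
  have cl: "clinear_map scA (*) \<theta>" using ch by (simp add: character_def)
  show "\<theta> (x + y) = \<theta> x + \<theta> y" for x y using cl by (rule cl_add)
  show "\<theta> (scaleR r x) = scaleR r (\<theta> x)" for r x
    by (rule cl_scaleR[OF cl A]) (simp add: scaleR_conv_of_real)
  show "norm (\<theta> x) \<le> norm x * 1" for x using char_bound[OF A ch] by simp
qed

theorem theorem3p2:
  fixes scA :: "complex \<Rightarrow> 'a::{real_normed_algebra,banach} \<Rightarrow> 'a"
    and scU :: "complex \<Rightarrow> 'u::{real_normed_algebra,banach} \<Rightarrow> 'u"
    and \<theta> :: "'a \<Rightarrow> complex"
    and T :: "'a \<times> 'u \<Rightarrow> 'a \<times> 'u"
    and R1 :: "'a \<Rightarrow> 'a" and R2 :: "'a \<Rightarrow> 'u" and S1 :: "'u \<Rightarrow> 'a" and S2 :: "'u \<Rightarrow> 'u"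
  assumes "cplx_banach_alg scA" and "cplx_banach_alg scU"
    and "character scA \<theta>"
    and "clinear_map scA scA R1" and "clinear_map scA scU R2"
    and "clinear_map scU scA S1" and "clinear_map scU scU S2"
    and "\<And>a u. T (a, u) = (R1 a + S1 u, R2 a + S2 u)"
    and "multiplier (lau_mult scU \<theta>) T"
  shows "continuous_on UNIV R2 \<and> continuous_on UNIV S2 \<and>
         separating_space R1 \<subseteq> {a. \<theta> a = 0} \<and> separating_space S1 \<subseteq> {a. \<theta> a = 0}"
proof -
  note A = assms(1) and U = assms(2) and ch = assms(3)
  have bl: "bounded_linear \<theta>" by (rule char_bl[OF A ch])
  have mul: "\<And>x y. \<theta> (x * y) = \<theta> x * \<theta> y" using ch by (simp add: character_def)
  have sc: "\<And>c x. \<theta> (scA c x) = c * \<theta> x" using ch by (simp add: character_def clinear_map_def)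
  obtain a1 where "\<theta> a1 \<noteq> 0" using ch by (auto simp: character_def)
  define a0 where "a0 = scA (inverse (\<theta> a1)) a1"
  have t0: "\<theta> a0 = 1" using \<open>\<theta> a1 \<noteq> 0\<close> by (simp add: a0_def sc)
  have M: "\<And>x y. lau_mult scU \<theta> x (T y) = lau_mult scU \<theta> (T x) y"
    using assms(9) unfolding multiplier_def by blast
  have lin: "\<And>x. scU 0 x = 0" "\<And>x. scA 0 x = 0"
    using U A unfolding cplx_banach_alg_def by (metis of_real_0 scaleR_zero_left)+
  have lin0: "\<And>c. scU c 0 = 0" "\<And>c. scA c 0 = 0"
  proof -
    fix c
    have "scU c (0 + 0) = scU c 0 + scU c 0"
      using U unfolding cplx_banach_alg_def by blast
    moreover have "scA c (0 + 0) = scA c 0 + scA c 0"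
      using A unfolding cplx_banach_alg_def by blast
    ultimately show "scU c 0 = 0" "scA c 0 = 0" by simp_all
  qed
  have z: "R1 0 = 0" "R2 0 = 0" "S1 0 = 0" "S2 0 = 0" "\<theta> 0 = 0"
    using assms(4-7) bl by (auto intro: cl_zero simp: linear_simps)
  have E1: "a * R1 b = R1 a * b \<and> scU (\<theta> a) (R2 b) = scU (\<theta> b) (R2 a)" for a b
    using M[of "(a,0)" "(b,0)"] by (simp add: assms(8) lau_mult_def z lin lin0)
  have E2: "a * S1 v = 0 \<and> scU (\<theta> a) (S2 v) = scU (\<theta> (R1 a)) v + R2 a * v" for a v
    using M[of "(a,0)" "(0,v)"] by (simp add: assms(8) lau_mult_def z lin lin0)
  have one: "\<And>x. scU 1 x = x" using U unfolding cplx_banach_alg_def by (metis of_real_1 scaleR_one)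
  have R2eq: "R2 b = scU (\<theta> b) (R2 a0)" for b using E1[of a0 b] by (simp add: t0 one)
  have S2eq: "S2 v = scU (\<theta> (R1 a0)) v + R2 a0 * v" for v using E2[of a0 v] by (simp add: t0 one)
  have tR1: "\<theta> (R1 b) = \<theta> (R1 a0) * \<theta> b" for b
    using arg_cong[OF conjunct1[OF E1[of a0 b]], of \<theta>] by (simp add: mul t0)
  have tS1: "\<theta> (S1 v) = 0" for v
    using arg_cong[OF conjunct1[OF E2[of a0 v]], of \<theta>] by (simp add: mul t0 z)
  have nU: "\<And>c x. norm (scU c x) = cmod c * norm x" using U by (simp add: cplx_banach_alg_def)
  have "bounded_linear R2"
  proof (rule bounded_linear_intro[where K="norm (R2 a0)"])
    show "R2 (x + y) = R2 x + R2 y" for x y using assms(5) by (rule cl_add)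
    show "R2 (scaleR r x) = scaleR r (R2 x)" for r x
      by (rule cl_scaleR[OF assms(5) A cba_scaleR[OF U]])
    show "norm (R2 x) \<le> norm x * norm (R2 a0)" for x
      using char_bound[OF A ch, of x] unfolding R2eq[of x] nU by (simp add: mult_right_mono)
  qed
  hence c1: "continuous_on UNIV R2" by (simp add: linear_continuous_on)
  have "bounded_linear S2"
  proof (rule bounded_linear_intro[where K="cmod (\<theta> (R1 a0)) + norm (R2 a0)"])
    show "S2 (x + y) = S2 x + S2 y" for x y using assms(7) by (rule cl_add)
    show "S2 (scaleR r x) = scaleR r (S2 x)" for r x
      by (rule cl_scaleR[OF assms(7) U cba_scaleR[OF U]])
    show "norm (S2 x) \<le> norm x * (cmod (\<theta> (R1 a0)) + norm (R2 a0))" for x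
    proof -
      have "norm (S2 x) \<le> norm (scU (\<theta> (R1 a0)) x) + norm (R2 a0 * x)"
        unfolding S2eq[of x] by (rule norm_triangle_ineq)
      also have "\<dots> \<le> cmod (\<theta> (R1 a0)) * norm x + norm (R2 a0) * norm x"
        by (simp add: nU norm_mult_ineq)
      finally show ?thesis by (simp add: algebra_simps)
    qed
  qed
  hence c2: "continuous_on UNIV S2" by (simp add: linear_continuous_on)
  have tc: "\<And>f y. f \<longlonglongrightarrow> y \<Longrightarrow> (\<lambda>n. \<theta> (f n)) \<longlonglongrightarrow> \<theta> y"
    using bl by (rule bounded_linear.tendsto)
  have s1: "separating_space R1 \<subseteq> {a. \<theta> a = 0}"
  proof
    fix y assume "y \<in> separating_space R1"
    then obtain x where x0: "x \<longlonglongrightarrow> 0" and xy: "(\<lambda>n. R1 (x n)) \<longlonglongrightarrow> y"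
      by (auto simp: separating_space_def)
    have "(\<lambda>n. \<theta> (R1 (x n))) \<longlonglongrightarrow> \<theta> y" by (rule tc[OF xy])
    moreover have "(\<lambda>n. \<theta> (R1 (x n))) \<longlonglongrightarrow> 0"
    proof -
      have "(\<lambda>n. \<theta> (R1 a0) * \<theta> (x n)) \<longlonglongrightarrow> \<theta> (R1 a0) * \<theta> 0"
        by (intro tendsto_mult tendsto_const tc[OF x0])
      moreover have "\<And>n. \<theta> (R1 (x n)) = \<theta> (R1 a0) * \<theta> (x n)" by (rule tR1)
      ultimately show ?thesis using z(5) by simp
    qed
    ultimately show "y \<in> {a. \<theta> a = 0}" using LIMSEQ_unique by auto
  qed
  have s2: "separating_space S1 \<subseteq> {a. \<theta> a = 0}"
  proof
    fix y assume "y \<in> separating_space S1"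
    then obtain x where xy: "(\<lambda>n. S1 (x n)) \<longlonglongrightarrow> y"
      by (auto simp: separating_space_def)
    have "(\<lambda>n. \<theta> (S1 (x n))) \<longlonglongrightarrow> \<theta> y" by (rule tc[OF xy])
    hence "(\<lambda>n. 0::complex) \<longlonglongrightarrow> \<theta> y" by (simp add: tS1)
    from LIMSEQ_unique[OF tendsto_const this] show "y \<in> {a. \<theta> a = 0}" by simp
  qed
  show ?thesis using c1 c2 s1 s2 by blast
qed

end
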